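(* Let $f_1,\dots,f_n$ satisfy Assumptions A1 and A2 and let $f_0$ satisfy Assumption A3. Then for all $x\in\mathbb{R}^d$ and $\beta\in\Delta^{n-1}$, \[\big\|\nabla(f_0\circ x^* )(\beta)^\top-\nabla f_0(x)^\top\widehat{\nabla}x^*(x,\beta)\big\|_{1,2}\le\frac{1}{\mu}\left(\frac{M_1}{2M_0}\|\nabla f_0(x)\|_2+L_0M_0\right)\|\nabla f_\beta(x)\|_2.\] The right-hand side is denoted $\mathrm{err}_{\nabla f_0}(x,\beta)$.
   Context: Assumption A1: each $f_i:\mathbb{R}^d\to\mathbb{R}$ is twice differentiable with $\mu\mathbf{I}\preceq\nabla^2 f_i\preceq L\mathbf{I}$, $0<\mu\le L$, $\kappa:=L/\mu$. Assumption A2: each $\nabla^2 f_i$ is $L_H$-Lipschitz (operator norm). Assumption A3: $f_0:\mathbb{R}^d\to\mathbb{R}$ has $L_0$-Lipschitz gradient. $F=(f_1,\dots,f_n)$, $\nabla F(x)\in\mathbb{R}^{n\times d}$ its Jacobian, $f_\beta=\sum_i\beta_if_i$ for $\beta$ in the simplex $\Delta^{n-1}$, $x^*(\beta)=x_\beta=\operatorname{argmin}_x f_\beta(x)$. $\nabla(f_0\circ x^* )(\beta)^\top$ denotes the derivative of $f_0\circ x^*$ as a row vector ($=\nabla f_0(x_\beta)^\top\nabla x^*(\beta)$), and $\widehat{\nabla}x^*(x,\beta):=-\nabla^2 f_\beta(x)^{-1}\nabla F(x)^\top$. $R$ is the $\ell_2$-diameter of the Pareto set of $F$, $M_0:=\kappa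 R$, $M_1:=2\kappa^2R(1+L_HR/\mu)$. $\|A\|_{1,2}:=\sup_{\|z\|_1=1}\|Az\|_2$. *)

theory Defs
  imports "HOL-Analysis.Analysis"
begin

text \<open>Objective index type 'n (so F = (f_i)_{i in 'n}, n = CARD('n)); x in real^'d.\<close>

definition fbeta :: "('n::finite \<Rightarrow> real^'d \<Rightarrow> real) \<Rightarrow> real^'n \<Rightarrow> real^'d \<Rightarrow> real" where
  "fbeta f \<beta> x = (\<Sum>i\<in>UNIV. \<beta>$i * f i x)"

definition xstar :: "('n::finite \<Rightarrow> real^'d \<Rightarrow> real) \<Rightarrow> real^'n \<Rightarrow> real^'d" where
  "xstar f \<beta> = (THE x. \<forall>y. fbeta f \<beta> x \<le> fbeta f \<beta> y)"

definition prob_simplex :: "(real^'n::finite) set" where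
  "prob_simplex = {\<beta>. (\<forall>i. 0 \<le> \<beta>$i) \<and> (\<Sum>i\<in>UNIV. \<beta>$i) = 1}"

definition pareto_set :: "('n::finite \<Rightarrow> real^'d \<Rightarrow> real) \<Rightarrow> (real^'d) set" where
  "pareto_set f = {x. \<not> (\<exists>y. (\<forall>i. f i y \<le> f i x) \<and> (\<exists>i. f i y < f i x))}"

definition jac :: "('n::finite \<Rightarrow> real^'d \<Rightarrow> real^'d) \<Rightarrow> real^'d \<Rightarrow> real^'d^'n" where
  "jac g x = (\<chi> i. g i x)"

definition hess_beta :: "('n::finite \<Rightarrow> real^'d \<Rightarrow> real^'d^'d) \<Rightarrow> real^'n \<Rightarrow> real^'d \<Rightarrow> real^'d^'d" where
  "hess_beta H \<beta> x = (\<Sum>i\<in>UNIV. \<beta>$i *\<^sub>R H i x)"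

definition grad_beta :: "('n::finite \<Rightarrow> real^'d \<Rightarrow> real^'d) \<Rightarrow> real^'n \<Rightarrow> real^'d \<Rightarrow> real^'d" where
  "grad_beta g \<beta> x = (\<Sum>i\<in>UNIV. \<beta>$i *\<^sub>R g i x)"

definition hat_grad_xstar ::
  "('n::finite \<Rightarrow> real^'d \<Rightarrow> real^'d) \<Rightarrow> ('n \<Rightarrow> real^'d \<Rightarrow> real^'d^'d) \<Rightarrow> real^'d \<Rightarrow> real^'n \<Rightarrow> real^'n^'d" where
  "hat_grad_xstar g H x \<beta> = - (matrix_inv (hess_beta H \<beta> x) ** transpose (jac g x))"

definition row_of :: "(real^'n::finite \<Rightarrow> real) \<Rightarrow> real^'n^1" where
  "row_of D = (\<chi> k. \<chi> j. D (axis j 1))"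

definition rowmat :: "real^'n::finite \<Rightarrow> real^'n^1" where
  "rowmat v = (\<chi> k. v)"

definition l1norm :: "real^'n::finite \<Rightarrow> real" where
  "l1norm z = (\<Sum>i\<in>UNIV. \<bar>z$i\<bar>)"

definition norm12 :: "real^'n::finite^'m::finite \<Rightarrow> real" where
  "norm12 A = Sup {norm (A *v z) | z. l1norm z = 1}"

end

theory Submission
  imports Defs
begin

lemma line_deriv:
  fixes \<phi> :: "real^'d::finite \<Rightarrow> real"
  assumes "\<And>y. (\<phi> has_derivative (\<lambda>h. g y \<bullet> h)) (at y)"
  shows "((\<lambda>t. \<phi> (y + t *\<^sub>R w)) has_real_derivative (g (y + t *\<^sub>R w) \<bullet> w)) (at t)"
proof -
  have 1: "((\<lambda>t. y + t *\<^sub>R w) has_derivative (\<lambda>s. s *\<^sub>R w)) (at t)"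
    by (auto intro!: derivative_eq_intros)
  have "((\<lambda>t. \<phi> (y + t *\<^sub>R w)) has_derivative (\<lambda>s. g (y + t *\<^sub>R w) \<bullet> (s *\<^sub>R w))) (at t)"
    using has_derivative_compose[OF 1 assms[of "y + t *\<^sub>R w"]] by (simp add: o_def)
  moreover have "(\<lambda>s. g (y + t *\<^sub>R w) \<bullet> (s *\<^sub>R w)) = (*) (g (y + t *\<^sub>R w) \<bullet> w)"
    by (auto simp: fun_eq_iff)
  ultimately show ?thesis unfolding has_field_derivative_def by simp
qed

lemma line_deriv2:
  fixes g :: "real^'d::finite \<Rightarrow> real^'d"
  assumes "\<And>y. (g has_derivative (\<lambda>h. H y *v h)) (at y)"
  shows "((\<lambda>t. g (y + t *\<^sub>R w) \<bullet> w) has_real_derivative (w \<bullet> (H (y + t *\<^sub>R w) *v w))) (at t)"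
proof -
  have 1: "((\<lambda>t. y + t *\<^sub>R w) has_derivative (\<lambda>s. s *\<^sub>R w)) (at t)"
    by (auto intro!: derivative_eq_intros)
  have "((\<lambda>t. g (y + t *\<^sub>R w)) has_derivative (\<lambda>s. H (y + t *\<^sub>R w) *v (s *\<^sub>R w))) (at t)"
    using has_derivative_compose[OF 1 assms[of "y + t *\<^sub>R w"]] by (simp add: o_def)
  then have "((\<lambda>t. g (y + t *\<^sub>R w) \<bullet> w) has_derivative (\<lambda>s. (H (y + t *\<^sub>R w) *v (s *\<^sub>R w)) \<bullet> w)) (at t)"
    by (auto intro!: derivative_eq_intros)
  moreover have "(\<lambda>s. (H (y + t *\<^sub>R w) *v (s *\<^sub>R w)) \<bullet> w) = (*) (w \<bullet> (H (y + t *\<^sub>R w) *v w))"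
    by (auto simp: fun_eq_iff matrix_vector_mult_scaleR inner_commute)
  ultimately show ?thesis unfolding has_field_derivative_def by simp
qed

lemma taylor2:
  fixes \<phi> :: "real^'d::finite \<Rightarrow> real"
  assumes d1: "\<And>y. (\<phi> has_derivative (\<lambda>h. g y \<bullet> h)) (at y)"
    and d2: "\<And>y. (g has_derivative (\<lambda>h. H y *v h)) (at y)"
  shows "\<exists>t. 0 < t \<and> t < 1 \<and> \<phi> z = \<phi> y + g y \<bullet> (z - y)
           + ((z - y) \<bullet> (H (y + t *\<^sub>R (z - y)) *v (z - y))) / 2"
proof -
  define w where "w = z - y"
  define diff :: "nat \<Rightarrow> real \<Rightarrow> real" where "diff = (\<lambda>m t. if m = 0 then \<phi> (y + t *\<^sub>R w)
     else if m = 1 then g (y + t *\<^sub>R w) \<bullet> w else w \<bullet> (H (y + t *\<^sub>R w) *v w))"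
  have "\<forall>m t. m < 2 \<and> 0 \<le> t \<and> t \<le> 1 \<longrightarrow> DERIV (diff m) t :> diff (Suc m) t"
  proof (intro allI impI)
    fix m t assume "m < (2::nat) \<and> 0 \<le> t \<and> t \<le> (1::real)"
    then have "m = 0 \<or> m = 1" by auto
    then show "DERIV (diff m) t :> diff (Suc m) t"
    proof
      assume "m = 0" then show ?thesis using line_deriv[OF d1, of y w t] by (simp add: diff_def)
    next
      assume "m = 1" then show ?thesis using line_deriv2[OF d2, of y w t] by (simp add: diff_def)
    qed
  qed
  from Maclaurin[of 1 2 diff "\<lambda>t. \<phi> (y + t *\<^sub>R w)", OF _ _ _ this]
  obtain t where t: "0 < t" "t < 1" "\<phi> (y + w) = (\<Sum>m<2. diff m 0 / fact m * 1 ^ m) + diff 2 t / fact 2 * 1 ^ 2"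
    by (auto simp: diff_def)
  have "(\<Sum>m<2. diff m 0 / fact m * 1 ^ m) = \<phi> y + g y \<bullet> w"
    by (simp add: diff_def numeral_2_eq_2)
  with t show ?thesis by (intro exI[of _ t]) (auto simp: diff_def w_def)
qed

lemma wsum:
  fixes \<beta> \<beta>' :: "real^'n::finite"
  assumes b: "\<beta> \<in> prob_simplex" and e: "(\<Sum>i\<in>UNIV. \<bar>\<beta>'$i - \<beta>$i\<bar>) \<le> \<epsilon>"
    and qa: "\<And>i. a \<le> q i" and qb: "\<And>i. q i \<le> c" and a0: "0 \<le> a"
  shows "a - \<epsilon> * c \<le> (\<Sum>i\<in>UNIV. \<beta>'$i * q i)"
proof -
  have b0: "\<And>i. 0 \<le> \<beta>$i" and b1: "(\<Sum>i\<in>UNIV. \<beta>$i) = 1" using b by (auto simp: prob_simplex_def)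
  have c0: "0 \<le> c" using qa qb a0 by (meson order_trans)
  have s: "(\<Sum>i\<in>UNIV. \<beta>'$i * q i) = (\<Sum>i\<in>UNIV. \<beta>$i * q i) + (\<Sum>i\<in>UNIV. (\<beta>'$i - \<beta>$i) * q i)"
    by (simp add: sum.distrib[symmetric] algebra_simps)
  have "a = (\<Sum>i\<in>UNIV. \<beta>$i * a)" using b1 by (simp add: sum_distrib_right[symmetric])
  also have "\<dots> \<le> (\<Sum>i\<in>UNIV. \<beta>$i * q i)" by (intro sum_mono mult_left_mono qa b0)
  finally have 1: "a \<le> (\<Sum>i\<in>UNIV. \<beta>$i * q i)" .
  have "- (\<epsilon> * c) \<le> - ((\<Sum>i\<in>UNIV. \<bar>\<beta>'$i - \<beta>$i\<bar>) * c)" using e c0 by (simp add: mult_right_mono)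
  also have "\<dots> = (\<Sum>i\<in>UNIV. - (\<bar>\<beta>'$i - \<beta>$i\<bar> * c))" by (simp add: sum_distrib_right sum_negf)
  also have "\<dots> \<le> (\<Sum>i\<in>UNIV. (\<beta>'$i - \<beta>$i) * q i)"
  proof (intro sum_mono)
    fix i
    have "\<bar>(\<beta>'$i - \<beta>$i) * q i\<bar> \<le> \<bar>\<beta>'$i - \<beta>$i\<bar> * c"
      using qa[of i] qb[of i] a0 by (simp add: abs_mult mult_left_mono)
    then show "- (\<bar>\<beta>'$i - \<beta>$i\<bar> * c) \<le> (\<beta>'$i - \<beta>$i) * q i" by linarith
  qed
  finally show ?thesis using s 1 by linarith
qed

lemma hess_vec: "hess_beta H \<beta> y *v v = (\<Sum>i\<in>UNIV. \<beta>$i *\<^sub>R (H i y *v v))"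
proof -
  have "\<And>k. (\<Sum>j\<in>UNIV. (\<Sum>i\<in>UNIV. \<beta>$i * H i y $ k $ j) * v $ j) = (\<Sum>i\<in>UNIV. \<beta>$i * (\<Sum>j\<in>UNIV. H i y $ k $ j * v $ j))"
    by (simp add: sum_distrib_left sum_distrib_right mult.assoc) (rule sum.swap)
  then show ?thesis
    by (simp add: hess_beta_def vec_eq_iff matrix_vector_mult_def sum_component)
qed

lemma fbeta_fun: "fbeta f \<beta> = (\<lambda>x. \<Sum>i\<in>UNIV. \<beta>$i * f i x)"
  by (rule ext) (simp add: fbeta_def)

lemma grad_beta_fun: "grad_beta g \<beta> = (\<lambda>x. \<Sum>i\<in>UNIV. \<beta>$i *\<^sub>R g i x)"
  by (rule ext) (simp add: grad_beta_def)

lemma pd_inv: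
  fixes A :: "real^'d::finite^'d"
  assumes mu: "0 < \<mu>" and pd: "\<And>v. \<mu> * (v \<bullet> v) \<le> v \<bullet> (A *v v)"
  shows "A ** matrix_inv A = mat 1 \<and> matrix_inv A ** A = mat 1"
proof -
  have "\<forall>x. A *v x = 0 \<longrightarrow> x = 0"
  proof (intro allI impI)
    fix x assume "A *v x = 0"
    with pd[of x] have "\<mu> * (x \<bullet> x) \<le> 0" by simp
    with mu have "x \<bullet> x \<le> 0" by (simp add: mult_le_0_iff)
    then show "x = 0" by (metis inner_ge_zero inner_eq_zero_iff order_antisym)
  qed
  then have "\<exists>B. B ** A = mat 1" using matrix_left_invertible_ker by blast
  then have "invertible A" using invertible_left_inverse by blast
  then show ?thesis unfolding matrix_inv_def invertible_def by (rule someI_ex)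
qed

lemma pd_inv_apply:
  fixes A :: "real^'d::finite^'d"
  assumes mu: "0 < \<mu>" and pd: "\<And>v. \<mu> * (v \<bullet> v) \<le> v \<bullet> (A *v v)"
  shows "A *v (matrix_inv A *v w) = w" "matrix_inv A *v (A *v w) = w"
  using pd_inv[OF mu pd] by (simp_all add: matrix_vector_mul_assoc)

lemma pd_inv_bound:
  fixes A :: "real^'d::finite^'d"
  assumes mu: "0 < \<mu>" and pd: "\<And>v. \<mu> * (v \<bullet> v) \<le> v \<bullet> (A *v v)"
  shows "norm (matrix_inv A *v w) \<le> norm w / \<mu>"
proof -
  define v where "v = matrix_inv A *v w"
  have Av: "A *v v = w" unfolding v_def by (rule pd_inv_apply[OF mu pd])
  have "\<mu> * (norm v)\<^sup>2 \<le> v \<bullet> w" using pd[of v] Av by (simp add: power2_norm_eq_inner)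
  also have "\<dots> \<le> norm v * norm w" by (rule norm_cauchy_schwarz)
  finally have 1: "\<mu> * (norm v)\<^sup>2 \<le> norm v * norm w" .
  show ?thesis
  proof (cases "norm v = 0")
    case True then show ?thesis using mu by (simp add: v_def)
  next
    case False
    then have "0 < norm v" by simp
    with 1 have "\<mu> * norm v \<le> norm w" by (simp add: power2_eq_square)
    then show ?thesis using mu by (simp add: v_def field_simps)
  qed
qed

lemma neg_mat_vec: "(- M) *v h = - (M *v (h::real^'n::finite))" for M :: "real^'n^'m::finite"
  by (simp add: vec_eq_iff matrix_vector_mult_def sum_negf)

lemma jacT_apply: "transpose (jac g y) *v h = (\<Sum>i\<in>UNIV. h$i *\<^sub>R g i y)"
  by (simp add: vec_eq_iff vector_matrix_mult_def jac_def sum_component mult.commute)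

lemma hat_apply:
  "hat_grad_xstar g H y \<beta> *v h = - (matrix_inv (hess_beta H \<beta> y) *v (\<Sum>i\<in>UNIV. h$i *\<^sub>R g i y))"
  unfolding hat_grad_xstar_def neg_mat_vec matrix_vector_mul_assoc[symmetric] jacT_apply ..

lemma l1_le_card: "(\<Sum>i\<in>UNIV. \<bar>h$i\<bar>) \<le> real CARD('n::finite) * norm (h::real^'n)"
proof -
  have "(\<Sum>i\<in>UNIV. \<bar>h$i\<bar>) \<le> (\<Sum>i\<in>(UNIV::'n set). norm h)" by (intro sum_mono component_le_norm_cart)
  then show ?thesis by simp
qed

lemma norm_wsum: "norm (\<Sum>i\<in>UNIV. (h::real^'n::finite)$i *\<^sub>R v i) \<le> (\<Sum>i\<in>UNIV. \<bar>h$i\<bar> * norm (v i :: 'a::real_normed_vector))"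
proof -
  have "norm (\<Sum>i\<in>UNIV. h$i *\<^sub>R v i) \<le> (\<Sum>i\<in>UNIV. norm (h$i *\<^sub>R v i))" by (rule norm_sum)
  then show ?thesis by simp
qed

lemma sum_axis: "(\<Sum>i\<in>UNIV. axis j (1::real) $ i *\<^sub>R v i) = (v j :: 'a::real_vector)"
proof -
  have "(\<Sum>i\<in>UNIV. axis j (1::real) $ i *\<^sub>R v i) = (\<Sum>i\<in>UNIV. if i = j then v i else 0)"
    by (intro sum.cong) (auto simp: axis_def)
  then show ?thesis by simp
qed

lemma axis_simplex: "axis j (1::real) \<in> prob_simplex"
  by (simp add: prob_simplex_def axis_def)

lemma l1_axis: "l1norm (axis j (1::real)) = 1"
  by (simp add: l1norm_def axis_def)

lemma norm12_rowmat:
  fixes a :: "real^'n::finite"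
  assumes a: "\<And>j. \<bar>a$j\<bar> \<le> C"
  shows "norm12 (rowmat a) \<le> C"
  unfolding norm12_def
proof (rule cSup_least)
  obtain j :: 'n where True by simp
  show "{norm (rowmat a *v z) |z. l1norm z = 1} \<noteq> {}" using l1_axis[of j] by blast
  fix v assume "v \<in> {norm (rowmat a *v z) |z. l1norm z = 1}"
  then obtain z where z: "l1norm z = 1" and v: "v = norm (rowmat a *v z)" by blast
  have "norm (rowmat a *v z) \<le> (\<Sum>k\<in>UNIV. \<bar>(rowmat a *v z)$k\<bar>)" by (rule norm_le_l1_cart)
  also have "\<dots> = \<bar>\<Sum>j\<in>UNIV. a$j * z$j\<bar>" by (simp add: rowmat_def matrix_vector_mult_def)
  also have "\<dots> \<le> (\<Sum>j\<in>UNIV. \<bar>a$j * z$j\<bar>)" by (rule sum_abs)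
  also have "\<dots> \<le> (\<Sum>j\<in>UNIV. C * \<bar>z$j\<bar>)"
    by (intro sum_mono) (simp add: abs_mult a mult_right_mono)
  also have "\<dots> = C" using z by (simp add: l1norm_def sum_distrib_left[symmetric])
  finally show "v \<le> C" using v by simp
qed

locale mo =
  fixes f :: "'n::finite \<Rightarrow> real^'d::finite \<Rightarrow> real"
    and g :: "'n \<Rightarrow> real^'d \<Rightarrow> real^'d"
    and H :: "'n \<Rightarrow> real^'d \<Rightarrow> real^'d^'d"
    and \<mu> L :: real
  assumes mu_pos: "0 < \<mu>" and mu_le_L: "\<mu> \<le> L"
    and grad: "\<And>i y. (f i has_derivative (\<lambda>h. g i y \<bullet> h)) (at y)"
    and hess: "\<And>i y. (g i has_derivative (\<lambda>h. H i y *v h)) (at y)"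
    and lower: "\<And>i y v. \<mu> * (v \<bullet> v) \<le> v \<bullet> (H i y *v v)"
    and upper: "\<And>i y v. v \<bullet> (H i y *v v) \<le> L * (v \<bullet> v)"
begin

lemma L_pos: "0 < L" using mu_pos mu_le_L by simp

lemma quad_lower: "f i y + g i y \<bullet> (z - y) + \<mu> / 2 * (norm (z - y))\<^sup>2 \<le> f i z"
proof -
  obtain t where t: "f i z = f i y + g i y \<bullet> (z - y) + ((z - y) \<bullet> (H i (y + t *\<^sub>R (z - y)) *v (z - y))) / 2"
    using taylor2[OF grad hess, of i z y] by blast
  have "\<mu> * ((z - y) \<bullet> (z - y)) \<le> (z - y) \<bullet> (H i (y + t *\<^sub>R (z - y)) *v (z - y))" by (rule lower)
  then show ?thesis using t by (simp add: power2_norm_eq_inner)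
qed

lemma quad_upper: "f i z \<le> f i y + g i y \<bullet> (z - y) + L / 2 * (norm (z - y))\<^sup>2"
proof -
  obtain t where t: "f i z = f i y + g i y \<bullet> (z - y) + ((z - y) \<bullet> (H i (y + t *\<^sub>R (z - y)) *v (z - y))) / 2"
    using taylor2[OF grad hess, of i z y] by blast
  have "(z - y) \<bullet> (H i (y + t *\<^sub>R (z - y)) *v (z - y)) \<le> L * ((z - y) \<bullet> (z - y))" by (rule upper)
  then show ?thesis using t by (simp add: power2_norm_eq_inner)
qed

lemma mono_i: "\<mu> * (norm (a - b))\<^sup>2 \<le> (g i a - g i b) \<bullet> (a - b)"
proof -
  have 1: "f i a + g i a \<bullet> (b - a) + \<mu> / 2 * (norm (b - a))\<^sup>2 \<le> f i b" by (rule quad_lower)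
  have 2: "f i b + g i b \<bullet> (a - b) + \<mu> / 2 * (norm (a - b))\<^sup>2 \<le> f i a" by (rule quad_lower)
  have "norm (b - a) = norm (a - b)" by (rule norm_minus_commute)
  moreover have "g i a \<bullet> (b - a) = - (g i a \<bullet> (a - b))"
    by (metis inner_minus_right minus_diff_eq)
  ultimately show ?thesis using 1 2 by (simp add: inner_diff_left)
qed

lemma cocoer: "f i a + g i a \<bullet> (b - a) + (norm (g i b - g i a))\<^sup>2 / (2 * L) \<le> f i b"
proof -
  define d where "d = g i b - g i a"
  define z where "z = b - (1 / L) *\<^sub>R d"
  have 1: "f i a + g i a \<bullet> (z - a) + \<mu> / 2 * (norm (z - a))\<^sup>2 \<le> f i z" by (rule quad_lower)
  have 2: "f i z \<le> f i b + g i b \<bullet> (z - b) + L / 2 * (norm (z - b))\<^sup>2" by (rule quad_upper)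
  have e1: "g i a \<bullet> (z - a) = g i a \<bullet> (b - a) - (1 / L) * (g i a \<bullet> d)"
    by (simp add: z_def inner_diff_right algebra_simps)
  have e2: "g i b \<bullet> (z - b) = - ((1 / L) * (g i b \<bullet> d))"
    by (simp add: z_def)
  have e3: "(norm (z - b))\<^sup>2 = (1 / L)\<^sup>2 * (norm d)\<^sup>2"
    using L_pos by (simp add: z_def power_divide)
  have e4: "g i b \<bullet> d - g i a \<bullet> d = (norm d)\<^sup>2"
    by (simp add: d_def power2_norm_eq_inner inner_diff_left)
  have "0 \<le> \<mu> / 2 * (norm (z - a))\<^sup>2" using mu_pos by simp
  then have h1: "f i a + g i a \<bullet> (b - a) - (1 / L) * (g i a \<bullet> d) \<le> f i z"
    using 1 unfolding e1 by linarith
  have h2: "f i z \<le> f i b - (1 / L) * (g i b \<bullet> d) + L / 2 * ((1 / L)\<^sup>2 * (norm d)\<^sup>2)"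
    using 2 unfolding e2 e3 by simp
  from h1 h2 have "f i a + g i a \<bullet> (b - a) - (1 / L) * (g i a \<bullet> d)
     \<le> f i b - (1 / L) * (g i b \<bullet> d) + L / 2 * ((1 / L)\<^sup>2 * (norm d)\<^sup>2)" by linarith
  moreover have "L / 2 * ((1 / L)\<^sup>2 * (norm d)\<^sup>2) = (norm d)\<^sup>2 / (2 * L)"
    using L_pos by (simp add: power2_eq_square field_simps)
  moreover have "(1 / L) * (g i b \<bullet> d) - (1 / L) * (g i a \<bullet> d) = (norm d)\<^sup>2 / L"
    using e4 by (simp add: diff_divide_distrib[symmetric])
  moreover have "(norm d)\<^sup>2 / L - (norm d)\<^sup>2 / (2 * L) = (norm d)\<^sup>2 / (2 * L)"
    using L_pos by (simp add: field_simps)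
  ultimately show ?thesis unfolding d_def by linarith
qed

lemma lip_i: "norm (g i a - g i b) \<le> L * norm (a - b)"
proof -
  have 1: "f i a + g i a \<bullet> (b - a) + (norm (g i b - g i a))\<^sup>2 / (2 * L) \<le> f i b" by (rule cocoer)
  have 2: "f i b + g i b \<bullet> (a - b) + (norm (g i a - g i b))\<^sup>2 / (2 * L) \<le> f i a" by (rule cocoer)
  have n: "norm (g i b - g i a) = norm (g i a - g i b)" by (rule norm_minus_commute)
  have "g i a \<bullet> (b - a) + g i b \<bullet> (a - b) = (g i a - g i b) \<bullet> (b - a)"
    by (simp add: inner_diff_left inner_diff_right algebra_simps)
  with 1 2 n have "(norm (g i a - g i b))\<^sup>2 / L \<le> (g i a - g i b) \<bullet> (a - b)"
    by (simp add: inner_diff_right algebra_simps add_divide_distrib[symmetric])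
  also have "\<dots> \<le> norm (g i a - g i b) * norm (a - b)" by (rule norm_cauchy_schwarz)
  finally have 3: "(norm (g i a - g i b))\<^sup>2 \<le> L * (norm (g i a - g i b) * norm (a - b))"
    using L_pos by (simp add: divide_le_eq mult.commute)
  show ?thesis
  proof (cases "norm (g i a - g i b) = 0")
    case True then show ?thesis using L_pos by simp
  next
    case False
    then have "0 < norm (g i a - g i b)" by simp
    with 3 show ?thesis by (simp add: power2_eq_square algebra_simps)
  qed
qed


definition close where
  "close \<beta>' \<beta> \<longleftrightarrow> \<beta> \<in> prob_simplex \<and> (\<Sum>i\<in>UNIV. \<bar>\<beta>'$i - \<beta>$i\<bar>) \<le> \<mu> / (4 * L)"

lemma W1:
  assumes "close \<beta>' \<beta>"
  shows "fbeta f \<beta>' y + grad_beta g \<beta>' y \<bullet> (z - y) + \<mu> / 4 * (norm (z - y))\<^sup>2 \<le> fbeta f \<beta>' z"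
proof -
  define q where "q i = f i z - f i y - g i y \<bullet> (z - y)" for i
  have "\<mu> / 2 * (norm (z - y))\<^sup>2 - \<mu> / (4 * L) * (L / 2 * (norm (z - y))\<^sup>2) \<le> (\<Sum>i\<in>UNIV. \<beta>'$i * q i)"
  proof (rule wsum)
    show "\<beta> \<in> prob_simplex" "(\<Sum>i\<in>UNIV. \<bar>\<beta>'$i - \<beta>$i\<bar>) \<le> \<mu> / (4 * L)" using assms by (auto simp: close_def)
    show "\<mu> / 2 * (norm (z - y))\<^sup>2 \<le> q i" for i unfolding q_def using quad_lower[of i y z] by linarith
    show "q i \<le> L / 2 * (norm (z - y))\<^sup>2" for i unfolding q_def using quad_upper[of i z y] by linarith
    show "0 \<le> \<mu> / 2 * (norm (z - y))\<^sup>2" using mu_pos by simp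
  qed
  moreover have "\<mu> / 2 * (norm (z - y))\<^sup>2 - \<mu> / (4 * L) * (L / 2 * (norm (z - y))\<^sup>2) \<ge> \<mu> / 4 * (norm (z - y))\<^sup>2"
    using L_pos mu_pos by (simp add: field_simps)
  moreover have "(\<Sum>i\<in>UNIV. \<beta>'$i * q i) = fbeta f \<beta>' z - fbeta f \<beta>' y - grad_beta g \<beta>' y \<bullet> (z - y)"
    by (simp add: q_def fbeta_def grad_beta_def inner_sum_left sum_subtractf right_diff_distrib)
  ultimately show ?thesis by linarith
qed

lemma W2:
  assumes "close \<beta>' \<beta>"
  shows "\<mu> / 2 * (norm (a - b))\<^sup>2 \<le> (grad_beta g \<beta>' a - grad_beta g \<beta>' b) \<bullet> (a - b)"
proof -
  have 1: "fbeta f \<beta>' a + grad_beta g \<beta>' a \<bullet> (b - a) + \<mu> / 4 * (norm (b - a))\<^sup>2 \<le> fbeta f \<beta>' b" by (rule W1[OF assms])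
  have 2: "fbeta f \<beta>' b + grad_beta g \<beta>' b \<bullet> (a - b) + \<mu> / 4 * (norm (a - b))\<^sup>2 \<le> fbeta f \<beta>' a" by (rule W1[OF assms])
  have "norm (b - a) = norm (a - b)" by (rule norm_minus_commute)
  moreover have "grad_beta g \<beta>' a \<bullet> (b - a) = - (grad_beta g \<beta>' a \<bullet> (a - b))"
    by (metis inner_minus_right minus_diff_eq)
  ultimately show ?thesis using 1 2 by (simp add: inner_diff_left)
qed

lemma fb_deriv: "(fbeta f \<beta> has_derivative (\<lambda>h. grad_beta g \<beta> y \<bullet> h)) (at y)"
proof -
  have "((\<lambda>x. \<Sum>i\<in>UNIV. \<beta>$i * f i x) has_derivative (\<lambda>h. \<Sum>i\<in>UNIV. \<beta>$i * (g i y \<bullet> h))) (at y)"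
    by (intro has_derivative_sum has_derivative_mult_right grad)
  moreover have "(\<lambda>h. \<Sum>i\<in>UNIV. \<beta>$i * (g i y \<bullet> h)) = (\<lambda>h. grad_beta g \<beta> y \<bullet> h)"
    by (auto simp: fun_eq_iff grad_beta_def inner_sum_left)
  ultimately show ?thesis by (simp add: fbeta_fun)
qed

lemma G_deriv: "(grad_beta g \<beta> has_derivative (\<lambda>h. hess_beta H \<beta> y *v h)) (at y)"
proof -
  have "((\<lambda>x. \<Sum>i\<in>UNIV. \<beta>$i *\<^sub>R g i x) has_derivative (\<lambda>h. \<Sum>i\<in>UNIV. \<beta>$i *\<^sub>R (H i y *v h))) (at y)"
    by (intro has_derivative_sum has_derivative_scaleR_right hess)
  then show ?thesis by (simp add: grad_beta_fun hess_vec)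
qed


lemma close_refl: "\<beta> \<in> prob_simplex \<Longrightarrow> close \<beta> \<beta>"
  using L_pos mu_pos by (simp add: close_def)

lemma exists_zero:
  assumes cl: "close \<beta>' \<beta>"
  shows "\<exists>x. grad_beta g \<beta>' x = 0"
proof -
  define F where "F = fbeta f \<beta>'"
  define G0 where "G0 = grad_beta g \<beta>' 0"
  define R0 where "R0 = 4 * norm G0 / \<mu>"
  have R0: "0 \<le> R0" using mu_pos by (simp add: R0_def)
  have cont: "continuous_on UNIV F"
    unfolding F_def by (intro continuous_at_imp_continuous_on ballI has_derivative_continuous[OF fb_deriv])
  obtain x where xin: "x \<in> cball 0 R0" and xmin: "\<forall>y\<in>cball 0 R0. F x \<le> F y"
    using continuous_attains_inf[OF compact_cball _ continuous_on_subset[OF cont], of 0 R0] R0 by auto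
  have gmin: "F x \<le> F y" for y
  proof (cases "y \<in> cball 0 R0")
    case True then show ?thesis using xmin by auto
  next
    case False
    then have ny: "norm y > R0" by simp
    have 1: "F 0 + G0 \<bullet> (y - 0) + \<mu> / 4 * (norm (y - 0))\<^sup>2 \<le> F y"
      unfolding F_def G0_def by (rule W1[OF cl])
    have 2: "- (norm G0 * norm y) \<le> G0 \<bullet> y"
      using norm_cauchy_schwarz[of "-G0" y] by simp
    have "4 * norm G0 / \<mu> < norm y" using ny by (simp add: R0_def)
    then have "4 * norm G0 < norm y * \<mu>" using mu_pos by (simp add: divide_less_eq)
    then have "norm G0 < \<mu> / 4 * norm y" by (simp add: mult.commute)
    then have "norm G0 * norm y \<le> \<mu> / 4 * norm y * norm y"
      by (intro mult_right_mono) auto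
    then have 3: "norm G0 * norm y \<le> \<mu> / 4 * (norm y)\<^sup>2" by (simp add: power2_eq_square)
    have "F 0 \<le> F y" using 1 2 3 by simp
    moreover have "F x \<le> F 0" using xmin R0 by simp
    ultimately show ?thesis by simp
  qed
  have "(\<lambda>h. grad_beta g \<beta>' x \<bullet> h) = (\<lambda>v. 0)"
    by (rule differential_zero_maxmin[of x UNIV, OF _ _ fb_deriv]) (use gmin F_def in auto)
  then have "grad_beta g \<beta>' x \<bullet> grad_beta g \<beta>' x = 0" by (rule fun_cong)
  then show ?thesis by auto
qed

lemma xstar_eq:
  assumes cl: "close \<beta>' \<beta>" and z: "grad_beta g \<beta>' x = 0"
  shows "xstar f \<beta>' = x"
  unfolding xstar_def
proof (rule the_equality)
  have q: "fbeta f \<beta>' x + \<mu> / 4 * (norm (y - x))\<^sup>2 \<le> fbeta f \<beta>' y" for y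
    using W1[OF cl, of x y] z by simp
  show "\<forall>y. fbeta f \<beta>' x \<le> fbeta f \<beta>' y"
  proof
    fix y show "fbeta f \<beta>' x \<le> fbeta f \<beta>' y" using q[of y] mu_pos
      by (smt (verit) zero_le_power2 mult_nonneg_nonneg divide_nonneg_nonneg)
  qed
  fix x' assume "\<forall>y. fbeta f \<beta>' x' \<le> fbeta f \<beta>' y"
  then have "fbeta f \<beta>' x' \<le> fbeta f \<beta>' x" by blast
  with q[of x'] have "\<mu> / 4 * (norm (x' - x))\<^sup>2 \<le> 0" by simp
  then have "(norm (x' - x))\<^sup>2 \<le> 0" using mu_pos by (simp add: mult_le_0_iff)
  then show "x' = x" by simp
qed

lemma xstar_zero: "close \<beta>' \<beta> \<Longrightarrow> grad_beta g \<beta>' (xstar f \<beta>') = 0"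
  using exists_zero xstar_eq by metis

lemma xstar_lip:
  assumes cl: "close \<beta>' \<beta>"
  shows "norm (xstar f \<beta>' - xstar f \<beta>) \<le> 2 / \<mu> * norm (\<Sum>i\<in>UNIV. (\<beta>'$i - \<beta>$i) *\<^sub>R g i (xstar f \<beta>))"
proof -
  define X where "X = xstar f \<beta>'"
  define x0 where "x0 = xstar f \<beta>"
  define w where "w = (\<Sum>i\<in>UNIV. (\<beta>'$i - \<beta>$i) *\<^sub>R g i x0)"
  have clb: "close \<beta> \<beta>" using cl by (intro close_refl) (simp add: close_def)
  have gX: "grad_beta g \<beta>' X = 0" using xstar_zero[OF cl] by (simp add: X_def)
  have g0: "grad_beta g \<beta> x0 = 0" using xstar_zero[OF clb] by (simp add: x0_def)
  have "grad_beta g \<beta>' x0 = grad_beta g \<beta>' x0 - grad_beta g \<beta> x0" using g0 by simp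
  also have "\<dots> = w" by (simp add: grad_beta_def w_def sum_subtractf[symmetric] scaleR_diff_left)
  finally have gw: "grad_beta g \<beta>' x0 = w" .
  have "\<mu> / 2 * (norm (X - x0))\<^sup>2 \<le> (grad_beta g \<beta>' X - grad_beta g \<beta>' x0) \<bullet> (X - x0)"
    by (rule W2[OF cl])
  also have "\<dots> = - (w \<bullet> (X - x0))" using gX gw by simp
  also have "\<dots> \<le> norm w * norm (X - x0)" using norm_cauchy_schwarz[of "-w" "X - x0"] by simp
  finally have 1: "\<mu> / 2 * (norm (X - x0))\<^sup>2 \<le> norm w * norm (X - x0)" .
  show ?thesis
  proof (cases "norm (X - x0) = 0")
    case True then show ?thesis using mu_pos by (simp add: X_def x0_def)
  next
    case False
    then have "0 < norm (X - x0)" by simp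
    with 1 have "\<mu> / 2 * norm (X - x0) \<le> norm w" by (simp add: power2_eq_square)
    then show ?thesis using mu_pos by (simp add: X_def x0_def w_def field_simps)
  qed
qed

lemma xstar_pareto:
  assumes b: "\<beta> \<in> prob_simplex"
  shows "xstar f \<beta> \<in> pareto_set f"
proof -
  define x where "x = xstar f \<beta>"
  have cl: "close \<beta> \<beta>" using b by (rule close_refl)
  have gx: "grad_beta g \<beta> x = 0" using xstar_zero[OF cl] by (simp add: x_def)
  have b0: "\<And>i. 0 \<le> \<beta>$i" using b by (auto simp: prob_simplex_def)
  { fix y assume le: "\<forall>i. f i y \<le> f i x" and lt: "\<exists>i. f i y < f i x"
    have "fbeta f \<beta> y \<le> fbeta f \<beta> x" unfolding fbeta_def
      by (intro sum_mono mult_left_mono) (use le b0 in auto)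
    moreover have "fbeta f \<beta> x + \<mu> / 4 * (norm (y - x))\<^sup>2 \<le> fbeta f \<beta> y"
      using W1[OF cl, of x y] gx by simp
    ultimately have "\<mu> / 4 * (norm (y - x))\<^sup>2 \<le> 0" by simp
    then have "(norm (y - x))\<^sup>2 \<le> 0" using mu_pos by (simp add: mult_le_0_iff)
    then have "y = x" by simp
    with lt have False by simp }
  then show ?thesis unfolding pareto_set_def x_def by blast
qed

lemma pareto_bounded: "bounded (pareto_set f)"
proof -
  define G0 where "G0 = (\<Sum>i\<in>UNIV. norm (g i 0))"
  have "pareto_set f \<subseteq> cball 0 (2 * G0 / \<mu>)"
  proof
    fix x assume xp: "x \<in> pareto_set f"
    show "x \<in> cball 0 (2 * G0 / \<mu>)"
    proof (rule ccontr)
      assume "x \<notin> cball 0 (2 * G0 / \<mu>)"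
      then have nx: "norm x > 2 * G0 / \<mu>" by simp
      have G0nn: "0 \<le> G0" unfolding G0_def by (simp add: sum_nonneg)
      then have nxp: "0 < norm x" using nx mu_pos by (smt (verit) divide_nonneg_pos)
      have G0lt: "G0 < \<mu> / 2 * norm x" using nx mu_pos by (simp add: field_simps)
      define t where "t = \<mu> / (2 * L)"
      have tp: "0 < t" using mu_pos L_pos by (simp add: t_def)
      define y where "y = x - t *\<^sub>R x"
      have lt: "f i y < f i x" for i
      proof -
        have 1: "f i y \<le> f i x + g i x \<bullet> (y - x) + L / 2 * (norm (y - x))\<^sup>2" by (rule quad_upper)
        have 2: "g i x \<bullet> (y - x) = - t * (g i x \<bullet> x)" by (simp add: y_def)
        have 3: "(norm (y - x))\<^sup>2 = t\<^sup>2 * (norm x)\<^sup>2" using tp by (simp add: y_def power_mult_distrib)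
        have 4: "\<mu> * (norm x)\<^sup>2 \<le> (g i x - g i 0) \<bullet> x" using mono_i[of x 0 i] by simp
        have "norm (g i 0) \<le> G0" unfolding G0_def
          by (rule member_le_sum) auto
        then have "norm (g i 0) * norm x \<le> G0 * norm x" using nxp by (simp add: mult_right_mono)
        moreover have "- (norm (g i 0) * norm x) \<le> g i 0 \<bullet> x"
          using norm_cauchy_schwarz[of "- g i 0" x] by simp
        moreover have "G0 * norm x < \<mu> / 2 * (norm x)\<^sup>2"
          using G0lt nxp by (simp add: power2_eq_square)
        ultimately have 5: "\<mu> / 2 * (norm x)\<^sup>2 < g i x \<bullet> x" using 4 by (simp add: inner_diff_left)
        have "t * (\<mu> / 2 * (norm x)\<^sup>2) < t * (g i x \<bullet> x)" using 5 tp by simp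
        moreover have "L / 2 * (t\<^sup>2 * (norm x)\<^sup>2) = t * (\<mu> / 4 * (norm x)\<^sup>2)"
          using L_pos by (simp add: t_def power2_eq_square field_simps)
        moreover have "0 < t * (\<mu> / 4 * (norm x)\<^sup>2)" using tp mu_pos nxp by simp
        moreover have "t * (\<mu> / 2 * (norm x)\<^sup>2) = 2 * (t * (\<mu> / 4 * (norm x)\<^sup>2))" by simp
        moreover have "f i y \<le> f i x - t * (g i x \<bullet> x) + L / 2 * (t\<^sup>2 * (norm x)\<^sup>2)"
          using 1 unfolding 2 3 by simp
        ultimately show ?thesis by linarith
      qed
      then have "(\<forall>i. f i y \<le> f i x) \<and> (\<exists>i. f i y < f i x)" by (auto intro: less_imp_le)
      then show False using xp unfolding pareto_set_def by blast
    qed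
  qed
  then show ?thesis using bounded_cball bounded_subset by blast
qed

lemma hess_pd:
  assumes "\<beta> \<in> prob_simplex"
  shows "\<mu> * (v \<bullet> v) \<le> v \<bullet> (hess_beta H \<beta> y *v v)"
proof -
  have b0: "\<And>i. 0 \<le> \<beta>$i" and b1: "(\<Sum>i\<in>UNIV. \<beta>$i) = 1" using assms by (auto simp: prob_simplex_def)
  have "\<mu> * (v \<bullet> v) = (\<Sum>i\<in>UNIV. \<beta>$i * (\<mu> * (v \<bullet> v)))" using b1 by (simp add: sum_distrib_right[symmetric])
  also have "\<dots> \<le> (\<Sum>i\<in>UNIV. \<beta>$i * (v \<bullet> (H i y *v v)))" by (intro sum_mono mult_left_mono lower b0)
  also have "\<dots> = v \<bullet> (hess_beta H \<beta> y *v v)" by (simp add: hess_vec inner_sum_right)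
  finally show ?thesis .
qed

lemma G_diff: "grad_beta g \<beta>' y - grad_beta g \<beta> y = (\<Sum>i\<in>UNIV. (\<beta>'$i - \<beta>$i) *\<^sub>R g i y)"
  by (simp add: grad_beta_def sum_subtractf[symmetric] scaleR_diff_left)

lemma xstar_deriv:
  assumes b: "\<beta> \<in> prob_simplex"
  shows "(xstar f has_derivative (\<lambda>h. hat_grad_xstar g H (xstar f \<beta>) \<beta> *v h)) (at \<beta>)"
  unfolding has_derivative_at_alt
proof (intro conjI allI impI)
  show "bounded_linear (\<lambda>h. hat_grad_xstar g H (xstar f \<beta>) \<beta> *v h)" by simp
  fix e :: real assume e: "0 < e"
  define x0 where "x0 = xstar f \<beta>"
  define A0 where "A0 = hess_beta H \<beta> x0"
  define B where "B = matrix_inv A0"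
  define N where "N = real CARD('n)"
  define gs where "gs = (\<Sum>i\<in>UNIV. norm (g i x0))"
  define K where "K = 2 / \<mu> * gs + 1"
  define r where "r = \<mu> / (4 * L * N)"
  have Np: "0 < N" by (simp add: N_def)
  have gs0: "0 \<le> gs" by (simp add: gs_def sum_nonneg)
  have "0 \<le> 2 / \<mu> * gs" using gs0 mu_pos by simp
  then have Kp: "0 < K" by (simp add: K_def)
  have rp: "0 < r" using mu_pos L_pos Np by (simp add: r_def)
  have pd: "\<And>v. \<mu> * (v \<bullet> v) \<le> v \<bullet> (A0 *v v)" unfolding A0_def by (rule hess_pd[OF b])
  have clb: "close \<beta> \<beta>" by (rule close_refl[OF b])
  have g0: "grad_beta g \<beta> x0 = 0" using xstar_zero[OF clb] by (simp add: x0_def)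
  define e1 where "e1 = e * \<mu> / (2 * K)"
  have e1p: "0 < e1" using e mu_pos Kp by (simp add: e1_def)
  obtain d1 where d1: "0 < d1" and d1h: "\<And>y. norm (y - x0) < d1 \<Longrightarrow>
      norm (grad_beta g \<beta> y - grad_beta g \<beta> x0 - A0 *v (y - x0)) \<le> e1 * norm (y - x0)"
    using G_deriv[of \<beta> x0, unfolded has_derivative_at_alt] e1p unfolding A0_def by blast
  define d where "d = min r (min (d1 / K) (e * \<mu> / (2 * N * L * K)))"
  have dp: "0 < d" using rp d1 Kp e mu_pos Np L_pos by (simp add: d_def)
  show "\<exists>d>0. \<forall>y. norm (y - \<beta>) < d \<longrightarrow> norm (xstar f y - xstar f \<beta> - hat_grad_xstar g H (xstar f \<beta>) \<beta> *v (y - \<beta>)) \<le> e * norm (y - \<beta>)"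
  proof (intro exI[of _ d] conjI allI impI dp)
    fix \<beta>' assume hd: "norm (\<beta>' - \<beta>) < d"
    define h where "h = \<beta>' - \<beta>"
    define X where "X = xstar f \<beta>'"
    define \<delta> where "\<delta> = X - x0"
    have hr: "norm h < r" using hd by (simp add: h_def d_def)
    have l1: "(\<Sum>i\<in>UNIV. \<bar>\<beta>'$i - \<beta>$i\<bar>) \<le> N * norm h"
      using l1_le_card[of h] by (simp add: h_def N_def)
    also have "\<dots> \<le> N * r" using hr Np by simp
    also have "\<dots> = \<mu> / (4 * L)" using Np by (simp add: r_def)
    finally have cl: "close \<beta>' \<beta>" using b by (simp add: close_def)
    have gX: "grad_beta g \<beta>' X = 0" using xstar_zero[OF cl] by (simp add: X_def)
    have hcomp: "\<And>i. \<beta>'$i - \<beta>$i = h$i" by (simp add: h_def)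
    have nw: "norm (\<Sum>i\<in>UNIV. h$i *\<^sub>R g i x0) \<le> norm h * gs"
    proof -
      have "norm (\<Sum>i\<in>UNIV. h$i *\<^sub>R g i x0) \<le> (\<Sum>i\<in>UNIV. \<bar>h$i\<bar> * norm (g i x0))" by (rule norm_wsum)
      also have "\<dots> \<le> (\<Sum>i\<in>UNIV. norm h * norm (g i x0))"
        by (intro sum_mono mult_right_mono component_le_norm_cart) auto
      finally show ?thesis by (simp add: gs_def sum_distrib_left)
    qed
    have dK: "norm \<delta> \<le> K * norm h"
    proof -
      have "norm \<delta> \<le> 2 / \<mu> * norm (\<Sum>i\<in>UNIV. h$i *\<^sub>R g i x0)"
        using xstar_lip[OF cl] by (simp add: \<delta>_def X_def x0_def hcomp)
      also have "\<dots> \<le> 2 / \<mu> * (norm h * gs)" using nw mu_pos by (intro mult_left_mono) auto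
      also have "\<dots> \<le> K * norm h" using mu_pos by (simp add: K_def algebra_simps)
      finally show ?thesis .
    qed
    have hdK: "K * norm h < K * d" using hd Kp by (simp add: h_def)
    have "d \<le> d1 / K" by (simp add: d_def)
    then have "K * d \<le> K * (d1 / K)" using Kp by (intro mult_left_mono) auto
    then have "K * d \<le> d1" using Kp by simp
    then have dd1: "norm \<delta> < d1" using dK hdK by linarith
    define T1 where "T1 = grad_beta g \<beta> X - grad_beta g \<beta> x0 - A0 *v \<delta>"
    define T2 where "T2 = (\<Sum>i\<in>UNIV. h$i *\<^sub>R (g i X - g i x0))"
    define w where "w = (\<Sum>i\<in>UNIV. h$i *\<^sub>R g i x0)"
    have "grad_beta g \<beta>' X - grad_beta g \<beta> X = (\<Sum>i\<in>UNIV. h$i *\<^sub>R g i X)"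
      using G_diff[of \<beta>' X \<beta>] by (simp add: hcomp)
    also have "\<dots> = w + T2" by (simp add: w_def T2_def sum.distrib[symmetric] scaleR_diff_right)
    finally have i0: "grad_beta g \<beta>' X - grad_beta g \<beta> X = w + T2" .
    have i1: "grad_beta g \<beta> X = - (w + T2)"
    proof -
      have "- grad_beta g \<beta> X = w + T2" using i0 gX by simp
      then show ?thesis by (metis minus_minus)
    qed
    have key: "A0 *v \<delta> + w = - T1 - T2" using i1 g0 by (simp add: T1_def algebra_simps)
    have "X - x0 - hat_grad_xstar g H x0 \<beta> *v h = \<delta> + B *v w"
      by (simp add: hat_apply \<delta>_def B_def A0_def w_def)
    also have "\<dots> = B *v (A0 *v \<delta> + w)"
      by (simp add: matrix_vector_right_distrib pd_inv_apply(2)[OF mu_pos pd] B_def)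
    finally have eqn: "X - x0 - hat_grad_xstar g H x0 \<beta> *v h = B *v (- T1 - T2)" using key by simp
    have nT1: "norm T1 \<le> e1 * norm \<delta>"
      using d1h[of X] dd1 by (simp add: T1_def \<delta>_def)
    have nT2: "norm T2 \<le> N * norm h * (L * norm \<delta>)"
    proof -
      have "norm T2 \<le> (\<Sum>i\<in>UNIV. \<bar>h$i\<bar> * norm (g i X - g i x0))" unfolding T2_def by (rule norm_wsum)
      also have "\<dots> \<le> (\<Sum>i\<in>UNIV. \<bar>h$i\<bar> * (L * norm \<delta>))"
        by (intro sum_mono mult_left_mono) (auto simp: \<delta>_def lip_i)
      also have "\<dots> = (\<Sum>i\<in>UNIV. \<bar>h$i\<bar>) * (L * norm \<delta>)" by (simp add: sum_distrib_right)
      also have "\<dots> \<le> N * norm h * (L * norm \<delta>)"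
        using l1_le_card[of h] L_pos by (intro mult_right_mono) (auto simp: N_def)
      finally show ?thesis .
    qed
    have b1: "e1 * norm \<delta> \<le> e * \<mu> / 2 * norm h"
    proof -
      have "e1 * norm \<delta> \<le> e1 * (K * norm h)" using dK e1p by (simp add: mult_left_mono)
      also have "\<dots> = e * \<mu> / 2 * norm h" using Kp by (simp add: e1_def field_simps)
      finally show ?thesis .
    qed
    have b2: "N * norm h * (L * norm \<delta>) \<le> e * \<mu> / 2 * norm h"
    proof -
      have "N * norm h * (L * norm \<delta>) \<le> N * norm h * (L * (K * norm h))"
        using dK Np L_pos by (intro mult_left_mono) auto
      also have "\<dots> = (N * L * K * norm h) * norm h" by (simp add: algebra_simps)
      also have "\<dots> \<le> (N * L * K * d) * norm h"
        using hd Np L_pos Kp by (intro mult_right_mono mult_left_mono) (auto simp: h_def)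
      also have "N * L * K * d \<le> e * \<mu> / 2"
      proof -
        have "d \<le> e * \<mu> / (2 * N * L * K)" by (simp add: d_def)
        then have "N * L * K * d \<le> N * L * K * (e * \<mu> / (2 * N * L * K))"
          using Np L_pos Kp by (intro mult_left_mono) auto
        also have "\<dots> = e * \<mu> / 2" using Np L_pos Kp by (simp add: field_simps)
        finally show ?thesis .
      qed
      then have "(N * L * K * d) * norm h \<le> e * \<mu> / 2 * norm h" by (intro mult_right_mono) auto
      finally show ?thesis .
    qed
    have "norm (X - x0 - hat_grad_xstar g H x0 \<beta> *v h) \<le> norm (- T1 - T2) / \<mu>"
      unfolding eqn B_def by (rule pd_inv_bound[OF mu_pos pd])
    also have "\<dots> \<le> (norm T1 + norm T2) / \<mu>"
    proof -
      have "norm (- T1 - T2) = norm (T2 - - T1)" by (rule norm_minus_commute)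
      also have "\<dots> = norm (T1 + T2)" by (simp add: add.commute)
      finally have "norm (- T1 - T2) \<le> norm T1 + norm T2" using norm_triangle_ineq[of T1 T2] by simp
      then show ?thesis using mu_pos by (intro divide_right_mono) auto
    qed
    also have "\<dots> \<le> (e * \<mu> * norm h) / \<mu>" using nT1 nT2 b1 b2 mu_pos
      by (intro divide_right_mono) auto
    also have "\<dots> = e * norm h" using mu_pos by simp
    finally show "norm (xstar f \<beta>' - xstar f \<beta> - hat_grad_xstar g H (xstar f \<beta>) \<beta> *v (\<beta>' - \<beta>)) \<le> e * norm (\<beta>' - \<beta>)"
      by (simp add: X_def x0_def h_def)
  qed
qed

lemma G_axis: "grad_beta g (axis j 1) y = g j y"
  by (simp add: grad_beta_def sum_axis)

lemma xstar_axis_zero: "g j (xstar f (axis j 1)) = 0"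
  using xstar_zero[OF close_refl[OF axis_simplex]] G_axis by metis

lemma grad_bound:
  assumes b: "\<beta> \<in> prob_simplex"
  shows "norm (g j (xstar f \<beta>)) \<le> L * diameter (pareto_set f)"
proof -
  have "norm (g j (xstar f \<beta>)) = norm (g j (xstar f \<beta>) - g j (xstar f (axis j 1)))"
    by (simp add: xstar_axis_zero)
  also have "\<dots> \<le> L * norm (xstar f \<beta> - xstar f (axis j 1))" by (rule lip_i)
  also have "\<dots> \<le> L * diameter (pareto_set f)"
    using diameter_bounded_bound[OF pareto_bounded xstar_pareto[OF b] xstar_pareto[OF axis_simplex[of j]]] L_pos
    by (simp add: dist_norm)
  finally show ?thesis .
qed

lemma W2s:
  assumes b: "\<beta> \<in> prob_simplex"
  shows "\<mu> * (norm (a - c))\<^sup>2 \<le> (grad_beta g \<beta> a - grad_beta g \<beta> c) \<bullet> (a - c)"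
proof -
  have b0: "\<And>i. 0 \<le> \<beta>$i" and b1: "(\<Sum>i\<in>UNIV. \<beta>$i) = 1" using b by (auto simp: prob_simplex_def)
  have "\<mu> * (norm (a - c))\<^sup>2 = (\<Sum>i\<in>UNIV. \<beta>$i * (\<mu> * (norm (a - c))\<^sup>2))" using b1 by (simp add: sum_distrib_right[symmetric])
  also have "\<dots> \<le> (\<Sum>i\<in>UNIV. \<beta>$i * ((g i a - g i c) \<bullet> (a - c)))" by (intro sum_mono mult_left_mono mono_i b0)
  also have "\<dots> = (grad_beta g \<beta> a - grad_beta g \<beta> c) \<bullet> (a - c)"
    by (simp add: grad_beta_def sum_subtractf[symmetric] inner_sum_left scaleR_diff_right[symmetric] inner_diff_left)
  finally show ?thesis .
qed

lemma dist_xstar: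
  assumes b: "\<beta> \<in> prob_simplex"
  shows "norm (x - xstar f \<beta>) \<le> norm (grad_beta g \<beta> x) / \<mu>"
proof -
  define x0 where "x0 = xstar f \<beta>"
  have g0: "grad_beta g \<beta> x0 = 0" using xstar_zero[OF close_refl[OF b]] by (simp add: x0_def)
  have "\<mu> * (norm (x - x0))\<^sup>2 \<le> grad_beta g \<beta> x \<bullet> (x - x0)" using W2s[OF b, of x x0] g0 by simp
  also have "\<dots> \<le> norm (grad_beta g \<beta> x) * norm (x - x0)" by (rule norm_cauchy_schwarz)
  finally have 1: "\<mu> * (norm (x - x0))\<^sup>2 \<le> norm (grad_beta g \<beta> x) * norm (x - x0)" .
  show ?thesis
  proof (cases "norm (x - x0) = 0")
    case True then show ?thesis using mu_pos by (simp add: x0_def)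
  next
    case False
    then have "0 < norm (x - x0)" by simp
    with 1 have "\<mu> * norm (x - x0) \<le> norm (grad_beta g \<beta> x)" by (simp add: power2_eq_square)
    then show ?thesis using mu_pos by (simp add: x0_def field_simps)
  qed
qed

lemma hess_diff:
  assumes b: "\<beta> \<in> prob_simplex"
    and A2: "\<And>i y z. onorm (\<lambda>v. (H i y - H i z) *v v) \<le> LH * norm (y - z)"
  shows "norm (hess_beta H \<beta> y *v v - hess_beta H \<beta> z *v v) \<le> LH * norm (y - z) * norm v"
proof -
  have b0: "\<And>i. 0 \<le> \<beta>$i" and b1: "(\<Sum>i\<in>UNIV. \<beta>$i) = 1" using b by (auto simp: prob_simplex_def)
  have "hess_beta H \<beta> y *v v - hess_beta H \<beta> z *v v = (\<Sum>i\<in>UNIV. \<beta>$i *\<^sub>R ((H i y - H i z) *v v))"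
    by (simp add: hess_vec sum_subtractf[symmetric] scaleR_diff_right[symmetric] matrix_vector_mult_diff_rdistrib)
  also have "norm \<dots> \<le> (\<Sum>i\<in>UNIV. \<bar>\<beta>$i\<bar> * norm ((H i y - H i z) *v v))" by (rule norm_wsum)
  also have "\<dots> \<le> (\<Sum>i\<in>UNIV. \<beta>$i * (LH * norm (y - z) * norm v))"
  proof (intro sum_mono)
    fix i
    have "norm ((H i y - H i z) *v v) \<le> onorm (\<lambda>v. (H i y - H i z) *v v) * norm v"
      by (rule onorm) simp
    also have "\<dots> \<le> LH * norm (y - z) * norm v" by (intro mult_right_mono A2) simp
    finally show "\<bar>\<beta>$i\<bar> * norm ((H i y - H i z) *v v) \<le> \<beta>$i * (LH * norm (y - z) * norm v)"
      using b0[of i] by (simp add: mult_left_mono)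
  qed
  also have "\<dots> = LH * norm (y - z) * norm v" using b1 by (simp add: sum_distrib_right[symmetric])
  finally show ?thesis .
qed

lemma entry_bound:
  fixes g0 :: "real^'d \<Rightarrow> real^'d"
  assumes b: "\<beta> \<in> prob_simplex"
    and A2: "\<And>i y z. onorm (\<lambda>v. (H i y - H i z) *v v) \<le> LH * norm (y - z)"
    and A3: "\<And>y z. norm (g0 y - g0 z) \<le> L0 * norm (y - z)"
    and LH0: "0 \<le> LH" and L00: "0 \<le> L0"
  defines "x0 \<equiv> xstar f \<beta>" and "R \<equiv> diameter (pareto_set f)"
  shows "\<bar>g0 x0 \<bullet> (matrix_inv (hess_beta H \<beta> x0) *v g j x0) - g0 x \<bullet> (matrix_inv (hess_beta H \<beta> x) *v g j x)\<bar>
     \<le> (L0 * (L * R / \<mu>) + norm (g0 x) * ((L / \<mu>) * (1 + LH * R / \<mu>))) * norm (x - x0)"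
proof -
  define A0 where "A0 = hess_beta H \<beta> x0"
  define Ax where "Ax = hess_beta H \<beta> x"
  define B0 where "B0 = matrix_inv A0"
  define Bx where "Bx = matrix_inv Ax"
  define p where "p = g j x0"
  define q where "q = g j x"
  define u0 where "u0 = B0 *v p"
  define ux where "ux = Bx *v q"
  define D where "D = norm (x - x0)"
  have D0: "0 \<le> D" by (simp add: D_def)
  have pd0: "\<And>v. \<mu> * (v \<bullet> v) \<le> v \<bullet> (A0 *v v)" unfolding A0_def by (rule hess_pd[OF b])
  have pdx: "\<And>v. \<mu> * (v \<bullet> v) \<le> v \<bullet> (Ax *v v)" unfolding Ax_def by (rule hess_pd[OF b])
  have np: "norm p \<le> L * R" unfolding p_def x0_def R_def by (rule grad_bound[OF b])
  have nu0: "norm u0 \<le> L * R / \<mu>"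
  proof -
    have "norm u0 \<le> norm p / \<mu>" unfolding u0_def B0_def by (rule pd_inv_bound[OF mu_pos pd0])
    also have "\<dots> \<le> L * R / \<mu>" using np mu_pos by (simp add: divide_right_mono)
    finally show ?thesis .
  qed
  have dec: "ux - u0 = Bx *v (q - p) + Bx *v (A0 *v u0 - Ax *v u0)"
  proof -
    have "A0 *v u0 = p" unfolding u0_def B0_def by (rule pd_inv_apply(1)[OF mu_pos pd0])
    moreover have "Bx *v (Ax *v u0) = u0" unfolding Bx_def by (rule pd_inv_apply(2)[OF mu_pos pdx])
    ultimately show ?thesis by (simp add: ux_def matrix_vector_mult_diff_distrib)
  qed
  have n1: "norm (Bx *v (q - p)) \<le> L * D / \<mu>"
  proof -
    have "norm (Bx *v (q - p)) \<le> norm (q - p) / \<mu>" unfolding Bx_def by (rule pd_inv_bound[OF mu_pos pdx])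
    also have "\<dots> \<le> L * D / \<mu>" using lip_i[of j x x0] mu_pos by (simp add: q_def p_def D_def divide_right_mono)
    finally show ?thesis .
  qed
  have n2: "norm (Bx *v (A0 *v u0 - Ax *v u0)) \<le> LH * D * (L * R / \<mu>) / \<mu>"
  proof -
    have "norm (Bx *v (A0 *v u0 - Ax *v u0)) \<le> norm (A0 *v u0 - Ax *v u0) / \<mu>"
      unfolding Bx_def by (rule pd_inv_bound[OF mu_pos pdx])
    also have "norm (A0 *v u0 - Ax *v u0) \<le> LH * norm (x0 - x) * norm u0"
      unfolding A0_def Ax_def by (rule hess_diff[OF b A2])
    also have "\<dots> \<le> LH * D * (L * R / \<mu>)"
    proof -
      have "norm (x0 - x) = D" by (simp add: D_def norm_minus_commute)
      moreover have "0 \<le> LH * D" using LH0 D0 by simp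
      ultimately show ?thesis using mult_left_mono[OF nu0, of "LH * D"] by simp
    qed
    finally show ?thesis using mu_pos by (simp add: divide_right_mono)
  qed
  have nd: "norm (ux - u0) \<le> (L / \<mu>) * (1 + LH * R / \<mu>) * D"
  proof -
    have "norm (ux - u0) \<le> L * D / \<mu> + LH * D * (L * R / \<mu>) / \<mu>"
      unfolding dec using n1 n2 norm_triangle_ineq[of "Bx *v (q - p)" "Bx *v (A0 *v u0 - Ax *v u0)"] by linarith
    also have "\<dots> = (L / \<mu>) * (1 + LH * R / \<mu>) * D" using mu_pos by (simp add: field_simps)
    finally show ?thesis .
  qed
  have eq: "g0 x0 \<bullet> u0 - g0 x \<bullet> ux = (g0 x0 - g0 x) \<bullet> u0 - g0 x \<bullet> (ux - u0)"
    by (simp add: inner_diff_left inner_diff_right)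
  have t1: "\<bar>(g0 x0 - g0 x) \<bullet> u0\<bar> \<le> L0 * D * (L * R / \<mu>)"
  proof -
    have "\<bar>(g0 x0 - g0 x) \<bullet> u0\<bar> \<le> norm (g0 x0 - g0 x) * norm u0" by (rule Cauchy_Schwarz_ineq2)
    also have "\<dots> \<le> L0 * D * (L * R / \<mu>)"
      using A3[of x0 x] nu0 L00 D0 by (intro mult_mono) (auto simp: D_def norm_minus_commute)
    finally show ?thesis .
  qed
  have t2: "\<bar>g0 x \<bullet> (ux - u0)\<bar> \<le> norm (g0 x) * ((L / \<mu>) * (1 + LH * R / \<mu>) * D)"
  proof -
    have "\<bar>g0 x \<bullet> (ux - u0)\<bar> \<le> norm (g0 x) * norm (ux - u0)" by (rule Cauchy_Schwarz_ineq2)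
    also have "\<dots> \<le> norm (g0 x) * ((L / \<mu>) * (1 + LH * R / \<mu>) * D)"
      using nd by (intro mult_left_mono) auto
    finally show ?thesis .
  qed
  have "\<bar>g0 x0 \<bullet> u0 - g0 x \<bullet> ux\<bar> \<le> L0 * D * (L * R / \<mu>) + norm (g0 x) * ((L / \<mu>) * (1 + LH * R / \<mu>) * D)"
    unfolding eq using t1 t2 by linarith
  also have "\<dots> = (L0 * (L * R / \<mu>) + norm (g0 x) * ((L / \<mu>) * (1 + LH * R / \<mu>))) * D"
    by (simp add: algebra_simps)
  finally show ?thesis by (simp add: u0_def ux_def B0_def Bx_def A0_def Ax_def p_def q_def D_def)
qed
end

theorem lemma4:
  fixes f :: "'n::finite \<Rightarrow> real^'d::finite \<Rightarrow> real"
    and g :: "'n \<Rightarrow> real^'d \<Rightarrow> real^'d"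
    and H :: "'n \<Rightarrow> real^'d \<Rightarrow> real^'d^'d"
    and f0 :: "real^'d \<Rightarrow> real"
    and g0 :: "real^'d \<Rightarrow> real^'d"
    and \<mu> L LH L0 :: real
    and x :: "real^'d" and \<beta> :: "real^'n"
  assumes mu_pos: "0 < \<mu>" and mu_le_L: "\<mu> \<le> L"
    and A1_grad: "\<And>i y. (f i has_derivative (\<lambda>h. g i y \<bullet> h)) (at y)"
    and A1_hess: "\<And>i y. (g i has_derivative (\<lambda>h. H i y *v h)) (at y)"
    and A1_lower: "\<And>i y v. \<mu> * (v \<bullet> v) \<le> v \<bullet> (H i y *v v)"
    and A1_upper: "\<And>i y v. v \<bullet> (H i y *v v) \<le> L * (v \<bullet> v)"
    and A2: "\<And>i y z. onorm (\<lambda>v. (H i y - H i z) *v v) \<le> LH * norm (y - z)"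
    and A3_grad: "\<And>y. (f0 has_derivative (\<lambda>h. g0 y \<bullet> h)) (at y)"
    and A3_lip: "\<And>y z. norm (g0 y - g0 z) \<le> L0 * norm (y - z)"
    and R_pos: "0 < diameter (pareto_set f)"
    and beta: "\<beta> \<in> prob_simplex"
  shows "let \<kappa> = L / \<mu>; R = diameter (pareto_set f);
             M0 = \<kappa> * R; M1 = 2 * \<kappa>\<^sup>2 * R * (1 + LH * R / \<mu>)
         in (f0 \<circ> xstar f) differentiable (at \<beta>) \<and>
            norm12 (row_of (frechet_derivative (f0 \<circ> xstar f) (at \<beta>))
                    - rowmat (g0 x v* hat_grad_xstar g H x \<beta>))
              \<le> (1 / \<mu>) * (M1 / (2 * M0) * norm (g0 x) + L0 * M0) * norm (grad_beta g \<beta> x)"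
proof -
  interpret m: mo f g H \<mu> L
    using mu_pos mu_le_L A1_grad A1_hess A1_lower A1_upper by unfold_locales auto
  define x0 where "x0 = xstar f \<beta>"
  define R where "R = diameter (pareto_set f)"
  define M where "M = hat_grad_xstar g H x0 \<beta>"
  define Mx where "Mx = hat_grad_xstar g H x \<beta>"
  obtain i0 :: 'n where True by simp
  obtain k0 :: 'd where True by simp
  have LH0: "0 \<le> LH"
  proof -
    have "0 \<le> onorm (\<lambda>v. (H i0 (axis k0 1) - H i0 0) *v v)" by (rule onorm_pos_le) simp
    also have "\<dots> \<le> LH * norm (axis k0 (1::real) - 0)" by (rule A2)
    finally show ?thesis by simp
  qed
  have L00: "0 \<le> L0"
  proof -
    have "0 \<le> norm (g0 (axis k0 1) - g0 0)" by simp
    also have "\<dots> \<le> L0 * norm (axis k0 (1::real) - 0)" by (rule A3_lip)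
    finally show ?thesis by simp
  qed
  have dX: "(xstar f has_derivative (\<lambda>h. M *v h)) (at \<beta>)"
    unfolding M_def x0_def by (rule m.xstar_deriv[OF beta])
  have dF: "((f0 \<circ> xstar f) has_derivative (\<lambda>h. g0 x0 \<bullet> (M *v h))) (at \<beta>)"
    using diff_chain_at[OF dX A3_grad[of "xstar f \<beta>"]] by (simp add: o_def x0_def)
  have diffb: "(f0 \<circ> xstar f) differentiable (at \<beta>)" using dF differentiable_def by blast
  have fd: "frechet_derivative (f0 \<circ> xstar f) (at \<beta>) = (\<lambda>h. g0 x0 \<bullet> (M *v h))"
    using frechet_derivative_at[OF dF] by simp
  have row: "row_of (\<lambda>h. g0 x0 \<bullet> (M *v h)) = rowmat (g0 x0 v* M)"
    by (simp add: row_of_def rowmat_def vec_eq_iff dot_lmul_matrix[symmetric] inner_axis)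
  define a where "a = g0 x0 v* M - g0 x v* Mx"
  have diffeq: "row_of (frechet_derivative (f0 \<circ> xstar f) (at \<beta>)) - rowmat (g0 x v* hat_grad_xstar g H x \<beta>) = rowmat a"
    unfolding fd row by (simp add: rowmat_def vec_eq_iff a_def Mx_def)
  have colj: "(u v* hat_grad_xstar g H y \<beta>)$j = - (u \<bullet> (matrix_inv (hess_beta H \<beta> y) *v g j y))" for u y j
  proof -
    have "(u v* hat_grad_xstar g H y \<beta>)$j = (u v* hat_grad_xstar g H y \<beta>) \<bullet> axis j 1"
      by (simp add: inner_axis)
    also have "\<dots> = u \<bullet> (hat_grad_xstar g H y \<beta> *v axis j 1)" by (rule dot_lmul_matrix)
    also have "\<dots> = - (u \<bullet> (matrix_inv (hess_beta H \<beta> y) *v g j y))"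
      by (simp add: hat_apply sum_axis)
    finally show ?thesis .
  qed
  define C where "C = L0 * (L * R / \<mu>) + norm (g0 x) * ((L / \<mu>) * (1 + LH * R / \<mu>))"
  have C0: "0 \<le> C" using L00 LH0 mu_pos mu_le_L R_pos by (simp add: C_def R_def)
  have dist: "norm (x - x0) \<le> norm (grad_beta g \<beta> x) / \<mu>"
    unfolding x0_def by (rule m.dist_xstar[OF beta])
  have aj: "\<bar>a$j\<bar> \<le> C * (norm (grad_beta g \<beta> x) / \<mu>)" for j
  proof -
    have "\<bar>a$j\<bar> = \<bar>g0 x0 \<bullet> (matrix_inv (hess_beta H \<beta> x0) *v g j x0) - g0 x \<bullet> (matrix_inv (hess_beta H \<beta> x) *v g j x)\<bar>"
      by (simp add: a_def M_def Mx_def colj)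
    also have "\<dots> \<le> C * norm (x - x0)"
      unfolding C_def R_def x0_def by (rule m.entry_bound[OF beta A2 A3_lip LH0 L00])
    also have "\<dots> \<le> C * (norm (grad_beta g \<beta> x) / \<mu>)" using dist C0 by (rule mult_left_mono)
    finally show ?thesis .
  qed
  define E where "E = (1 / \<mu>) * ((2 * (L / \<mu>)\<^sup>2 * R * (1 + LH * R / \<mu>)) / (2 * ((L / \<mu>) * R)) * norm (g0 x) + L0 * ((L / \<mu>) * R)) * norm (grad_beta g \<beta> x)"
  have eqC: "C * (norm (grad_beta g \<beta> x) / \<mu>) = E"
    using mu_pos mu_le_L R_pos by (simp add: C_def E_def R_def field_simps power2_eq_square)
  have fin: "norm12 (rowmat a) \<le> E"
    using norm12_rowmat[of a, OF aj] unfolding eqC .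
  show ?thesis unfolding Let_def diffeq R_def[symmetric]
  proof (rule conjI)
    show "(f0 \<circ> xstar f) differentiable (at \<beta>)" by (rule diffb)
    show "norm12 (rowmat a) \<le> 1 / \<mu> * (2 * (L / \<mu>)\<^sup>2 * R * (1 + LH * R / \<mu>) / (2 * (L / \<mu> * R)) * norm (g0 x) + L0 * (L / \<mu> * R)) * norm (grad_beta g \<beta> x)"
      using fin by (simp add: E_def)
  qed
qed

end
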